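(* Let $U$ be a unicyclic graph of order $n\ge 5$, and let $X$ be an eigenvector of the adjacency matrix $A(U^c)$ corresponding to its least eigenvalue $\lambda_{\min}(U^c)$. Then $X$ has at least two positive entries and at least two negative entries.
   Context: A unicyclic graph is a connected graph containing exactly one cycle. $U^c$ denotes the complement of $U$, and $\lambda_{\min}(G)$ denotes the least eigenvalue of the adjacency matrix of a graph $G$. *)

theory Defs
  imports "Jordan_Normal_Form.Matrix" "Jordan_Normal_Form.Char_Poly"
begin

text \<open>A finite simple graph on vertex set {0..<n}: E symmetric and irreflexive
  (only its restriction to {0..<n} matters).\<close>
definition simple_graph :: "nat \<Rightarrow> (nat \<Rightarrow> nat \<Rightarrow> bool) \<Rightarrow> bool" where
  "simple_graph n E \<longleftrightarrow> (\<forall>u v. E u v \<longrightarrow> E v u) \<and> (\<forall>v. \<not> E v v)"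

definition connected_graph :: "nat \<Rightarrow> (nat \<Rightarrow> nat \<Rightarrow> bool) \<Rightarrow> bool" where
  "connected_graph n E \<longleftrightarrow>
     (\<forall>u<n. \<forall>v<n. (\<lambda>x y. x < n \<and> y < n \<and> E x y)\<^sup>*\<^sup>* u v)"

definition is_cycle :: "nat \<Rightarrow> (nat \<Rightarrow> nat \<Rightarrow> bool) \<Rightarrow> nat list \<Rightarrow> bool" where
  "is_cycle n E vs \<longleftrightarrow> length vs \<ge> 3 \<and> distinct vs \<and> set vs \<subseteq> {0..<n} \<and>
     (\<forall>i < length vs. E (vs ! i) (vs ! ((i + 1) mod length vs)))"

text \<open>Cycles are identified by their edge sets (so rotations/reversals coincide).\<close>
definition cycle_edges :: "nat list \<Rightarrow> nat set set" where
  "cycle_edges vs = {{vs ! i, vs ! ((i + 1) mod length vs)} | i. i < length vs}"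

definition cycles :: "nat \<Rightarrow> (nat \<Rightarrow> nat \<Rightarrow> bool) \<Rightarrow> nat set set set" where
  "cycles n E = cycle_edges ` {vs. is_cycle n E vs}"

definition unicyclic :: "nat \<Rightarrow> (nat \<Rightarrow> nat \<Rightarrow> bool) \<Rightarrow> bool" where
  "unicyclic n E \<longleftrightarrow> simple_graph n E \<and> connected_graph n E \<and> card (cycles n E) = 1"

definition adj_mat :: "nat \<Rightarrow> (nat \<Rightarrow> nat \<Rightarrow> bool) \<Rightarrow> real mat" where
  "adj_mat n E = mat n n (\<lambda>(i, j). if E i j then 1 else 0)"

definition compl_graph :: "(nat \<Rightarrow> nat \<Rightarrow> bool) \<Rightarrow> nat \<Rightarrow> nat \<Rightarrow> bool" where
  "compl_graph E u v \<longleftrightarrow> u \<noteq> v \<and> \<not> E u v"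

definition lambda_min :: "real mat \<Rightarrow> real" where
  "lambda_min A = Min {k. eigenvalue A k}"

end

theory Submission
  imports Defs
begin


definition nq :: "nat \<Rightarrow> (nat \<Rightarrow> real) \<Rightarrow> real" where
  "nq n x = (\<Sum>i<n. (x i)^2)"
definition mv :: "nat \<Rightarrow> (nat \<Rightarrow> nat \<Rightarrow> real) \<Rightarrow> (nat \<Rightarrow> real) \<Rightarrow> nat \<Rightarrow> real" where
  "mv n a x = (\<lambda>i. \<Sum>j<n. a i j * x j)"
definition bl :: "nat \<Rightarrow> (nat \<Rightarrow> nat \<Rightarrow> real) \<Rightarrow> (nat \<Rightarrow> real) \<Rightarrow> (nat \<Rightarrow> real) \<Rightarrow> real" where
  "bl n a x w = (\<Sum>i<n. x i * mv n a w i)"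
definition fro :: "nat \<Rightarrow> (nat \<Rightarrow> nat \<Rightarrow> real) \<Rightarrow> real" where
  "fro n a = 1 + (\<Sum>i<n. \<Sum>j<n. (a i j)^2)"
definition symm :: "nat \<Rightarrow> (nat \<Rightarrow> nat \<Rightarrow> real) \<Rightarrow> bool" where
  "symm n a \<longleftrightarrow> (\<forall>i<n. \<forall>j<n. a i j = a j i)"

lemma my_CS:
  fixes a b :: "nat \<Rightarrow> real"
  shows "(\<Sum>i\<in>I. a i * b i)\<^sup>2 \<le> (\<Sum>i\<in>I. (a i)\<^sup>2) * (\<Sum>i\<in>I. (b i)\<^sup>2)"
proof (cases "(\<Sum>i\<in>I. (b i)\<^sup>2) > 0")
  case False
  then consider "\<And>i. i\<in>I \<Longrightarrow> b i = 0" | "infinite I"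
    by (metis (mono_tags, lifting) sum_pos2 zero_le_power2 zero_less_power2)
  thus ?thesis by fastforce
next
  case True
  define r where "r \<equiv> (\<Sum>i\<in>I. a i * b i) / (\<Sum>i\<in>I. (b i)\<^sup>2)"
  have "0 \<le> (\<Sum>i\<in>I. (a i - r * b i)\<^sup>2)"
    by (simp add: sum_nonneg)
  also have "... = (\<Sum>i\<in>I. (a i)\<^sup>2) - 2 * r * (\<Sum>i\<in>I. a i * b i) + r\<^sup>2 * (\<Sum>i\<in>I. (b i)\<^sup>2)"
    by (simp add: algebra_simps power2_eq_square sum_distrib_left flip: sum.distrib)
  also have "\<dots> = (\<Sum>i\<in>I. (a i)\<^sup>2) - ((\<Sum>i\<in>I. a i * b i))\<^sup>2 / (\<Sum>i\<in>I. (b i)\<^sup>2)"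
    by (simp add: r_def power2_eq_square)
  finally have "((\<Sum>i\<in>I. a i * b i))\<^sup>2 / (\<Sum>i\<in>I. (b i)\<^sup>2) \<le> (\<Sum>i\<in>I. (a i)\<^sup>2)"
    by (simp add: le_diff_eq)
  thus ?thesis by (simp add: pos_divide_le_eq True)
qed

lemma nq_nonneg: "nq n x \<ge> 0"
  unfolding nq_def by (simp add: sum_nonneg)

lemma fro_ge1: "fro n a \<ge> 1"
  unfolding fro_def by (simp add: sum_nonneg)

lemma mv_bound: "nq n (mv n a x) \<le> fro n a * nq n x"
proof -
  have "nq n (mv n a x) = (\<Sum>i<n. (\<Sum>j<n. a i j * x j)^2)" unfolding nq_def mv_def by simp
  also have "\<dots> \<le> (\<Sum>i<n. (\<Sum>j<n. (a i j)^2) * nq n x)"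
    unfolding nq_def by (intro sum_mono my_CS)
  also have "\<dots> = (\<Sum>i<n. \<Sum>j<n. (a i j)^2) * nq n x" by (simp add: sum_distrib_right)
  also have "\<dots> \<le> fro n a * nq n x" unfolding fro_def
    by (intro mult_right_mono nq_nonneg) simp
  finally show ?thesis .
qed

lemma bl_bound: "(bl n a x w)^2 \<le> nq n x * nq n (mv n a w)"
  unfolding bl_def nq_def by (rule my_CS)

lemma q_bound: "\<bar>bl n a x x\<bar> \<le> fro n a * nq n x"
proof -
  have "(bl n a x x)^2 \<le> nq n x * (fro n a * nq n x)"
    using bl_bound[of n a x x] mv_bound[of n a x] nq_nonneg[of n x]
    by (meson mult_left_mono order_trans)
  also have "\<dots> \<le> (fro n a * nq n x)^2"
  proof -
    have "0 \<le> (fro n a - 1) * (fro n a * (nq n x * nq n x))"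
      using fro_ge1[of n a] nq_nonneg[of n x] by (intro mult_nonneg_nonneg) auto
    then show ?thesis by (simp add: power2_eq_square algebra_simps)
  qed
  finally have h: "(bl n a x x)^2 \<le> (fro n a * nq n x)^2" .
  have p: "0 \<le> fro n a * nq n x" using fro_ge1[of n a] nq_nonneg[of n x] by simp
  show ?thesis using h abs_le_square_iff[of "bl n a x x" "fro n a * nq n x"] p by simp
qed

lemma bl_sym: assumes "symm n a" shows "bl n a x w = bl n a w x"
proof -
  have "bl n a x w = (\<Sum>i<n. \<Sum>j<n. x i * a i j * w j)"
    unfolding bl_def mv_def by (simp add: sum_distrib_left mult.assoc)
  also have "\<dots> = (\<Sum>j<n. \<Sum>i<n. x i * a i j * w j)" by (rule sum.swap)
  also have "\<dots> = (\<Sum>j<n. \<Sum>i<n. w j * a j i * x i)"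
    using assms unfolding symm_def by (intro sum.cong refl) (simp add: mult.commute)
  also have "\<dots> = bl n a w x"
    unfolding bl_def mv_def by (simp add: sum_distrib_left mult.assoc)
  finally show ?thesis .
qed

lemma bl_self_mv: assumes "symm n a" shows "bl n a x (mv n a x) = nq n (mv n a x)"
  using bl_sym[OF assms, of x "mv n a x"] unfolding bl_def nq_def
  by (simp add: power2_eq_square)

lemma bl_expand:
  assumes "symm n a"
  shows "bl n a (\<lambda>i. x i + t * w i) (\<lambda>i. x i + t * w i)
     = bl n a x x + 2 * t * bl n a x w + t^2 * bl n a w w"
proof -
  have "bl n a (\<lambda>i. x i + t * w i) (\<lambda>i. x i + t * w i)
     = bl n a x x + t * bl n a x w + t * bl n a w x + t^2 * bl n a w w"
    unfolding bl_def mv_def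
    by (simp add: algebra_simps sum.distrib sum_distrib_left power2_eq_square)
  then show ?thesis using bl_sym[OF assms, of w x] by simp
qed

lemma psd_CS:
  assumes "symm n a" and psd: "\<And>z. bl n a z z \<ge> 0"
  shows "(bl n a x w)^2 \<le> bl n a x x * bl n a w w"
proof -
  define p where "p = bl n a x x"
  define q where "q = bl n a x w"
  define r where "r = bl n a w w"
  have f: "\<And>t. p + 2 * t * q + t^2 * r \<ge> 0"
    using psd bl_expand[OF assms(1)] unfolding p_def q_def r_def by metis
  have r0: "r \<ge> 0" using psd unfolding r_def by simp
  show ?thesis
  proof (cases "r = 0")
    case True
    have "q = 0"
    proof (rule ccontr)
      assume "q \<noteq> 0"
      have "p + 2 * (-(p+1)/(2*q)) * q + (-(p+1)/(2*q))^2 * r \<ge> 0" by (rule f)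
      with True \<open>q \<noteq> 0\<close> show False by (simp add: field_simps)
    qed
    then show ?thesis unfolding q_def[symmetric] p_def[symmetric] r_def[symmetric] using True by simp
  next
    case False
    with r0 have r: "r > 0" by simp
    have "p + 2 * (-q/r) * q + (-q/r)^2 * r \<ge> 0" by (rule f)
    then have "p - q^2 / r \<ge> 0" using r by (simp add: field_simps power2_eq_square)
    then have "q^2 \<le> p * r" using r by (simp add: field_simps)
    then show ?thesis unfolding p_def q_def r_def .
  qed
qed



lemma nq_cong: "(\<And>i. i < n \<Longrightarrow> x i = y i) \<Longrightarrow> nq n x = nq n y"
  unfolding nq_def by (intro sum.cong) auto

lemma bl_zero: "nq n x = 0 \<Longrightarrow> bl n a x x = 0"
  using q_bound[of n a x] by simp

lemma no_inverse_psd: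
  assumes sb: "symm n b" and psd: "\<And>z. bl n b z z \<ge> 0"
    and small: "\<And>e. e > 0 \<Longrightarrow> \<exists>x. nq n x > 0 \<and> bl n b x x < e * nq n x"
    and inv: "\<And>x i. i < n \<Longrightarrow> mv n c (mv n b x) i = x i"
  shows False
proof -
  define Kb where "Kb = fro n b"
  define Kc where "Kc = fro n c"
  have Kb: "Kb \<ge> 1" and Kc: "Kc \<ge> 1" unfolding Kb_def Kc_def by (auto intro: fro_ge1)
  define e where "e = 1 / (2 * Kb * Kc)"
  have e: "e > 0" using Kb Kc unfolding e_def by simp
  obtain x where x: "nq n x > 0" "bl n b x x < e * nq n x" using small[OF e] by blast
  define y where "y = mv n b x"
  have nqx: "nq n x = nq n (mv n c y)" unfolding y_def by (rule nq_cong) (simp add: inv)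
  have nqx_le: "nq n x \<le> Kc * nq n y" unfolding nqx Kc_def by (rule mv_bound)
  have "(nq n y)^2 = (bl n b x y)^2" unfolding y_def bl_self_mv[OF sb] ..
  also have "\<dots> \<le> bl n b x x * bl n b y y" by (rule psd_CS[OF sb psd])
  also have "\<dots> \<le> (e * nq n x) * (Kb * nq n y)"
  proof (rule mult_mono)
    show "bl n b y y \<le> Kb * nq n y" using q_bound[of n b y] unfolding Kb_def by simp
    show "0 \<le> e * nq n x" using e x by simp
    show "0 \<le> bl n b y y" by (rule psd)
  qed (use x in simp)
  finally have h: "(nq n y)^2 \<le> (e * nq n x) * (Kb * nq n y)" .
  have ny: "nq n y > 0"
  proof (rule ccontr)
    assume "\<not> nq n y > 0"
    then have "nq n y = 0" using nq_nonneg[of n y] by simp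
    then show False using nqx_le x Kc by simp
  qed
  have "nq n y \<le> e * nq n x * Kb"
  proof -
    from h have "nq n y * nq n y \<le> (e * nq n x * Kb) * nq n y"
      by (simp add: power2_eq_square algebra_simps)
    then show ?thesis using ny by simp
  qed
  then have "Kc * nq n y \<le> Kc * (e * nq n x * Kb)" using Kc by (intro mult_left_mono) auto
  then have "nq n x \<le> Kc * (e * nq n x * Kb)" using nqx_le by linarith
  also have "\<dots> = nq n x / 2" unfolding e_def using Kb Kc by (simp add: field_simps)
  finally show False using x by simp
qed

lemma exists_min_fun:
  assumes "bl n a y y < \<alpha> * nq n y"
  shows "\<exists>m. m < \<alpha> \<and> (\<forall>x. m * nq n x \<le> bl n a x x) \<and>
            (\<forall>e>0. \<exists>x. nq n x > 0 \<and> bl n a x x < (m + e) * nq n x)"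
proof -
  define S where "S = {bl n a x x / nq n x | x. nq n x > 0}"
  have ny: "nq n y > 0"
  proof (rule ccontr)
    assume "\<not> nq n y > 0"
    then have "nq n y = 0" using nq_nonneg[of n y] by simp
    then show False using assms bl_zero[of n y a] by simp
  qed
  have yS: "bl n a y y / nq n y \<in> S" unfolding S_def using ny by blast
  have bdd: "bdd_below S"
  proof (rule bdd_belowI)
    fix s assume "s \<in> S"
    then obtain x where s: "s = bl n a x x / nq n x" and x: "nq n x > 0" unfolding S_def by blast
    have "- (fro n a * nq n x) \<le> bl n a x x" using q_bound[of n a x] by simp
    then have "- fro n a \<le> bl n a x x / nq n x" using x by (simp add: field_simps)
    then show "- fro n a \<le> s" using s by simp
  qed
  define m where "m = Inf S"
  have mle: "\<And>s. s \<in> S \<Longrightarrow> m \<le> s" unfolding m_def using bdd by (simp add: cInf_lower)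
  have "m < \<alpha>"
  proof -
    have "m \<le> bl n a y y / nq n y" using mle[OF yS] .
    also have "\<dots> < \<alpha>" using assms ny by (simp add: field_simps)
    finally show ?thesis .
  qed
  moreover have "\<forall>x. m * nq n x \<le> bl n a x x"
  proof
    fix x
    show "m * nq n x \<le> bl n a x x"
    proof (cases "nq n x > 0")
      case True
      then have "m \<le> bl n a x x / nq n x" using mle unfolding S_def by blast
      then show ?thesis using True by (simp add: field_simps)
    next
      case False
      then have "nq n x = 0" using nq_nonneg[of n x] by simp
      then show ?thesis using bl_zero[of n x a] by simp
    qed
  qed
  moreover have "\<forall>e>0. \<exists>x. nq n x > 0 \<and> bl n a x x < (m + e) * nq n x"
  proof (intro allI impI)
    fix e :: real assume e: "e > 0"
    have "Inf S < m + e" using e unfolding m_def by simp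
    then obtain s where "s \<in> S" "s < m + e"
      using cInf_lessD[of S "m + e"] yS by blast
    then obtain x where x: "nq n x > 0" "bl n a x x / nq n x < m + e" unfolding S_def by blast
    then have "bl n a x x < (m + e) * nq n x" by (simp add: field_simps)
    then show "\<exists>x. nq n x > 0 \<and> bl n a x x < (m + e) * nq n x" using x by blast
  qed
  ultimately show ?thesis by blast
qed

lemma mult_mat_vec_idx:
  assumes "M \<in> carrier_mat n n" "w \<in> carrier_vec n" "i < n"
  shows "(M *\<^sub>v w) $ i = (\<Sum>j<n. M $$ (i,j) * w $ j)"
  using assms by (simp add: scalar_prod_def atLeast0LessThan)

lemma exists_eigenvalue_below:
  fixes A :: "real mat"
  assumes A: "A \<in> carrier_mat n n" and sym: "\<And>i j. i < n \<Longrightarrow> j < n \<Longrightarrow> A $$ (i,j) = A $$ (j,i)"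
    and y: "bl n (\<lambda>i j. A $$ (i,j)) y y < \<alpha> * nq n y"
  shows "\<exists>e. eigenvalue A e \<and> e < \<alpha>"
proof -
  define a where "a = (\<lambda>i j. A $$ (i,j))"
  obtain m where m: "m < \<alpha>" "\<And>x. m * nq n x \<le> bl n a x x"
    "\<And>e. e > 0 \<Longrightarrow> \<exists>x. nq n x > 0 \<and> bl n a x x < (m + e) * nq n x"
    using exists_min_fun[of n a y \<alpha>] y unfolding a_def by blast
  define B where "B = char_matrix A m"
  have B: "B \<in> carrier_mat n n" unfolding B_def using A by simp
  define b where "b = (\<lambda>i j. B $$ (i,j))"
  have bij: "\<And>i j. i < n \<Longrightarrow> j < n \<Longrightarrow> b i j = a i j - (if i = j then m else 0)"
    unfolding b_def a_def B_def char_matrix_def using A by auto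
  have mvb: "\<And>x i. i < n \<Longrightarrow> mv n b x i = mv n a x i - m * x i"
  proof -
    fix x i assume i: "i < n"
    have "mv n b x i = (\<Sum>j<n. a i j * x j - (if j = i then m * x i else 0))"
      unfolding mv_def using i by (intro sum.cong refl) (auto simp: bij algebra_simps)
    also have "\<dots> = mv n a x i - m * x i"
      unfolding mv_def using i by (simp add: sum_subtractf)
    finally show "mv n b x i = mv n a x i - m * x i" .
  qed
  have blb: "\<And>x. bl n b x x = bl n a x x - m * nq n x"
  proof -
    fix x
    have "bl n b x x = (\<Sum>i<n. x i * mv n a x i - m * (x i)^2)"
      unfolding bl_def by (intro sum.cong refl) (simp add: mvb algebra_simps power2_eq_square)
    also have "\<dots> = bl n a x x - m * nq n x"
      unfolding bl_def nq_def by (simp add: sum_subtractf sum_distrib_left)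
    finally show "bl n b x x = bl n a x x - m * nq n x" .
  qed
  have sb: "symm n b" unfolding symm_def using sym by (auto simp: bij a_def)
  have psd: "\<And>z. bl n b z z \<ge> 0" using m(2) by (simp add: blb)
  have small: "\<And>e. e > 0 \<Longrightarrow> \<exists>x. nq n x > 0 \<and> bl n b x x < e * nq n x"
  proof -
    fix e :: real assume "e > 0"
    then obtain x where "nq n x > 0" "bl n a x x < (m + e) * nq n x" using m(3) by blast
    then show "\<exists>x. nq n x > 0 \<and> bl n b x x < e * nq n x"
      by (intro exI[of _ x]) (simp add: blb algebra_simps)
  qed
  have "det B = 0"
  proof (rule ccontr)
    assume "det B \<noteq> 0"
    from det_non_zero_imp_unit[OF B this, of undefined]
    obtain M where M: "M \<in> carrier_mat n n" "M * B = 1\<^sub>m n"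
      unfolding Units_def ring_mat_def by auto
    define c where "c = (\<lambda>i j. M $$ (i,j))"
    have inv: "\<And>x i. i < n \<Longrightarrow> mv n c (mv n b x) i = x i"
    proof -
      fix x :: "nat \<Rightarrow> real" and i assume i: "i < n"
      define xv where "xv = vec n x"
      have xv: "xv \<in> carrier_vec n" unfolding xv_def by simp
      have "M *\<^sub>v (B *\<^sub>v xv) = xv"
        using M B xv by (simp flip: assoc_mult_mat_vec)
      then have "x i = (M *\<^sub>v (B *\<^sub>v xv)) $ i" using i unfolding xv_def by simp
      also have "\<dots> = (\<Sum>j<n. c i j * (B *\<^sub>v xv) $ j)"
        unfolding c_def by (rule mult_mat_vec_idx[OF M(1) _ i]) (use B xv in auto)
      also have "\<dots> = (\<Sum>j<n. c i j * mv n b x j)"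
      proof (intro sum.cong refl)
        fix j assume "j \<in> {..<n}"
        then have j: "j < n" by simp
        have "(B *\<^sub>v xv) $ j = (\<Sum>k<n. B $$ (j,k) * xv $ k)" by (rule mult_mat_vec_idx[OF B xv j])
        also have "\<dots> = mv n b x j" unfolding mv_def b_def xv_def by (intro sum.cong refl) simp
        finally show "c i j * (B *\<^sub>v xv) $ j = c i j * mv n b x j" by simp
      qed
      finally show "mv n c (mv n b x) i = x i" unfolding mv_def by simp
    qed
    show False by (rule no_inverse_psd[OF sb psd small inv])
  qed
  then have "eigenvalue A m" unfolding eigenvalue_det[OF A] B_def .
  then show ?thesis using m(1) by blast
qed

lemma finite_eigenvalues:
  fixes A :: "real mat"
  assumes A: "A \<in> carrier_mat n n"
  shows "finite {k. eigenvalue A k}"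
proof -
  have "char_poly A \<noteq> 0" using degree_monic_char_poly[OF A] by auto
  then have "finite {k. poly (char_poly A) k = 0}" by (rule poly_roots_finite)
  then show ?thesis by (simp add: eigenvalue_root_char_poly[OF A])
qed



lemma cycle_edges_Union:
  assumes "length vs \<ge> 1"
  shows "\<Union> (cycle_edges vs) = set vs"
proof
  show "\<Union> (cycle_edges vs) \<subseteq> set vs"
  proof
    fix x assume "x \<in> \<Union> (cycle_edges vs)"
    then obtain i where i: "i < length vs" "x \<in> {vs ! i, vs ! ((i + 1) mod length vs)}"
      unfolding cycle_edges_def by blast
    have "(i + 1) mod length vs < length vs" using i(1) by (intro mod_less_divisor) auto
    then show "x \<in> set vs" using i by auto
  qed
  show "set vs \<subseteq> \<Union> (cycle_edges vs)"
  proof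
    fix x assume "x \<in> set vs"
    then obtain i where i: "i < length vs" "x = vs ! i" by (auto simp: in_set_conv_nth)
    then have "x \<in> {vs ! i, vs ! ((i + 1) mod length vs)}" by simp
    moreover have "{vs ! i, vs ! ((i + 1) mod length vs)} \<in> cycle_edges vs"
      unfolding cycle_edges_def using i by blast
    ultimately show "x \<in> \<Union> (cycle_edges vs)" by blast
  qed
qed

lemma two_cycles:
  assumes U: "unicyclic n E" and c1: "is_cycle n E vs" and c2: "is_cycle n E ws"
    and ne: "set vs \<noteq> set ws"
  shows False
proof -
  have "card (cycles n E) = 1" using U unfolding unicyclic_def by simp
  then obtain C where C: "cycles n E = {C}" by (rule card_1_singletonE)
  have "cycle_edges vs \<in> cycles n E" "cycle_edges ws \<in> cycles n E"
    unfolding cycles_def using c1 c2 by auto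
  then have "cycle_edges vs = cycle_edges ws" using C by simp
  then have "\<Union> (cycle_edges vs) = \<Union> (cycle_edges ws)" by simp
  moreover have "length vs \<ge> 1" "length ws \<ge> 1" using c1 c2 unfolding is_cycle_def by auto
  ultimately show False using ne cycle_edges_Union by metis
qed

lemma has_cycle:
  assumes U: "unicyclic n E"
  obtains vs where "is_cycle n E vs"
proof -
  have "card (cycles n E) = 1" using U unfolding unicyclic_def by simp
  then have "cycles n E \<noteq> {}" by auto
  then show ?thesis using that unfolding cycles_def by auto
qed

lemma less3: "(i::nat) < 3 \<Longrightarrow> i = 0 \<or> i = 1 \<or> i = 2" by auto
lemma less4: "(i::nat) < 4 \<Longrightarrow> i = 0 \<or> i = 1 \<or> i = 2 \<or> i = 3" by auto

lemma is_cycle3: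
  assumes "distinct [p,q,r]" "p < n" "q < n" "r < n" "E p q" "E q r" "E r p"
  shows "is_cycle n E [p,q,r]"
proof -
  have "\<forall>i<3. E ([p,q,r]!i) ([p,q,r]!((i+1) mod 3))"
  proof (intro allI impI)
    fix i :: nat assume "i < 3"
    then consider "i = 0" | "i = 1" | "i = 2" by linarith
    then show "E ([p,q,r]!i) ([p,q,r]!((i+1) mod 3))" by cases (use assms in simp_all)
  qed
  then show ?thesis unfolding is_cycle_def using assms by simp
qed

lemma is_cycle4:
  assumes "distinct [p,q,r,s]" "p < n" "q < n" "r < n" "s < n" "E p q" "E q r" "E r s" "E s p"
  shows "is_cycle n E [p,q,r,s]"
proof -
  have "\<forall>i<4. E ([p,q,r,s]!i) ([p,q,r,s]!((i+1) mod 4))"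
  proof (intro allI impI)
    fix i :: nat assume "i < 4"
    then consider "i = 0" | "i = 1" | "i = 2" | "i = 3" by linarith
    then show "E ([p,q,r,s]!i) ([p,q,r,s]!((i+1) mod 4))" by cases (use assms in simp_all)
  qed
  then show ?thesis unfolding is_cycle_def using assms by simp
qed

lemma exists_outside:
  assumes "finite S" "card S < n"
  obtains w where "w < n" "w \<notin> S"
proof -
  have "\<not> {..<n} \<subseteq> S"
  proof
    assume "{..<n} \<subseteq> S"
    then have "card {..<n} \<le> card S" using assms(1) by (rule card_mono[rotated])
    then show False using assms(2) by simp
  qed
  then show ?thesis using that by auto
qed

lemma has_nbr:
  assumes C: "connected_graph n E" and v: "v < n" and n: "n \<ge> 2"
  obtains z where "z < n" "E v z"
proof -
  obtain u where u: "u < n" "u \<noteq> v"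
    using n v by (metis One_nat_def less_2_cases_iff not_less_eq_eq one_less_numeral_iff semiring_norm(76) less_le_trans)
  have "(\<lambda>x y. x < n \<and> y < n \<and> E x y)\<^sup>*\<^sup>* v u" using C v u unfolding connected_graph_def by blast
  then show ?thesis using u(2) that
    by (cases rule: converse_rtranclpE) auto
qed

lemma P3:
  assumes U: "unicyclic n E" and n: "n \<ge> 5"
  shows "\<exists>p q b. p < n \<and> q < n \<and> b < n \<and> p \<noteq> b \<and> q \<noteq> b \<and> E p q \<and> \<not> E p b \<and> \<not> E q b"
proof (rule ccontr)
  assume "\<not> ?thesis"
  then have D: "\<And>p q b. p < n \<Longrightarrow> q < n \<Longrightarrow> b < n \<Longrightarrow> p \<noteq> b \<Longrightarrow> q \<noteq> b \<Longrightarrow> E p q \<Longrightarrow> E p b \<or> E q b"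
    by blast
  have sg: "simple_graph n E" using U unfolding unicyclic_def by simp
  then have sym: "\<And>u v. E u v \<Longrightarrow> E v u" unfolding simple_graph_def by blast
  obtain vs where cyc: "is_cycle n E vs" using U by (rule has_cycle)
  define k where "k = length vs"
  have k3: "k \<ge> 3" and dist: "distinct vs" and sub: "set vs \<subseteq> {0..<n}"
    and ed: "\<And>i. i < k \<Longrightarrow> E (vs ! i) (vs ! ((i + 1) mod k))"
    using cyc unfolding is_cycle_def k_def by auto
  have lt: "\<And>i. i < k \<Longrightarrow> vs ! i < n" using sub unfolding k_def by (auto dest!: nth_mem)
  have ne: "\<And>i j. i < k \<Longrightarrow> j < k \<Longrightarrow> i \<noteq> j \<Longrightarrow> vs ! i \<noteq> vs ! j"
    using dist unfolding k_def by (simp add: nth_eq_iff_index_eq)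
  have ed': "\<And>i. i + 1 < k \<Longrightarrow> E (vs ! i) (vs ! (i + 1))"
  proof -
    fix i assume i: "i + 1 < k"
    then have "(i + 1) mod k = i + 1" by simp
    with ed[of i] i show "E (vs ! i) (vs ! (i + 1))" by simp
  qed
  have cardvs: "card (set vs) = k" using dist unfolding k_def by (simp add: distinct_card)
  have inset: "\<And>i. i < k \<Longrightarrow> vs ! i \<in> set vs" unfolding k_def by simp
  consider "k = 3" | "k = 4" | "k \<ge> 5" using k3 by linarith
  then show False
  proof cases
    case 1
    obtain w where w: "w < n" "w \<notin> set vs" using exists_outside[of "set vs" n] cardvs 1 n by auto
    have w0: "w \<noteq> vs!0" and w1: "w \<noteq> vs!1" and w2: "w \<noteq> vs!2" using w inset 1 by auto
    have e01: "E (vs!0) (vs!1)" using ed'[of 0] 1 by (simp add: numeral_2_eq_2 numeral_3_eq_3)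
    have e12: "E (vs!1) (vs!2)" using ed'[of 1] 1 by (simp add: numeral_2_eq_2 numeral_3_eq_3)
    have e20: "E (vs!2) (vs!0)" using ed[of 2] 1 by simp
    have l: "vs!0 < n" "vs!1 < n" "vs!2 < n" using lt 1 by auto
    have d: "vs!0 \<noteq> vs!1" "vs!1 \<noteq> vs!2" "vs!0 \<noteq> vs!2" using ne 1 by auto
    have A: "E (vs!0) w \<or> E (vs!1) w" using D[of "vs!0" "vs!1" w] w(1) w0 w1 e01 l 1 by auto
    have B: "E (vs!1) w \<or> E (vs!2) w" using D[of "vs!1" "vs!2" w] w(1) w1 w2 e12 l 1 by auto
    have C: "E (vs!2) w \<or> E (vs!0) w" using D[of "vs!2" "vs!0" w] w(1) w2 w0 e20 l 1 by auto
    have ex: "\<exists>ws. is_cycle n E ws \<and> w \<in> set ws"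
    proof -
      { assume a: "E (vs!0) w" "E (vs!1) w"
        have "distinct [w, vs!0, vs!1]" using w0 w1 d by auto
        then have "is_cycle n E [w, vs!0, vs!1]" by (rule is_cycle3[OF _ w(1) l(1) l(2) sym[OF a(1)] e01 a(2)])
        then have ?thesis by force }
      moreover
      { assume a: "E (vs!1) w" "E (vs!2) w"
        have "distinct [w, vs!1, vs!2]" using w1 w2 d by auto
        then have "is_cycle n E [w, vs!1, vs!2]" by (rule is_cycle3[OF _ w(1) l(2) l(3) sym[OF a(1)] e12 a(2)])
        then have ?thesis by force }
      moreover
      { assume a: "E (vs!2) w" "E (vs!0) w"
        have "distinct [w, vs!2, vs!0]" using w2 w0 d by auto
        then have "is_cycle n E [w, vs!2, vs!0]" by (rule is_cycle3[OF _ w(1) l(3) l(1) sym[OF a(1)] e20 a(2)])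
        then have ?thesis by force }
      ultimately show ?thesis using A B C by blast
    qed
    then obtain ws where "is_cycle n E ws" "w \<in> set ws" by blast
    then show False using two_cycles[OF U cyc] w by blast
  next
    case 2
    obtain w where w: "w < n" "w \<notin> set vs" using exists_outside[of "set vs" n] cardvs 2 n by auto
    have w0: "w \<noteq> vs!0" and w1: "w \<noteq> vs!1" and w2: "w \<noteq> vs!2" and w3: "w \<noteq> vs!3"
      using w inset 2 by auto
    have e01: "E (vs!0) (vs!1)" using ed'[of 0] 2 by (simp add: numeral_2_eq_2 numeral_3_eq_3)
    have e12: "E (vs!1) (vs!2)" using ed'[of 1] 2 by (simp add: numeral_2_eq_2 numeral_3_eq_3)
    have e23: "E (vs!2) (vs!3)" using ed'[of 2] 2 by (simp add: numeral_2_eq_2 numeral_3_eq_3)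
    have e30: "E (vs!3) (vs!0)" using ed[of 3] 2 by simp
    have l: "vs!0 < n" "vs!1 < n" "vs!2 < n" "vs!3 < n" using lt 2 by auto
    have d: "vs!0 \<noteq> vs!1" "vs!1 \<noteq> vs!2" "vs!0 \<noteq> vs!2" "vs!0 \<noteq> vs!3" "vs!1 \<noteq> vs!3" "vs!2 \<noteq> vs!3"
      using ne 2 by auto
    have A: "E (vs!0) w \<or> E (vs!1) w" using D[of "vs!0" "vs!1" w] w(1) w0 w1 e01 l 2 by auto
    have B: "E (vs!2) w \<or> E (vs!3) w" using D[of "vs!2" "vs!3" w] w(1) w2 w3 e23 l 2 by auto
    have ex: "\<exists>ws. is_cycle n E ws \<and> w \<in> set ws"
    proof -
      { assume a: "E (vs!0) w" "E (vs!2) w"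
        have "distinct [w, vs!0, vs!1, vs!2]" using w0 w1 w2 d by auto
        then have "is_cycle n E [w, vs!0, vs!1, vs!2]" by (rule is_cycle4[OF _ w(1) l(1) l(2) l(3) sym[OF a(1)] e01 e12 a(2)])
        then have ?thesis by force }
      moreover
      { assume a: "E (vs!0) w" "E (vs!3) w"
        have "distinct [w, vs!3, vs!0]" using w0 w3 d by auto
        then have "is_cycle n E [w, vs!3, vs!0]" by (rule is_cycle3[OF _ w(1) l(4) l(1) sym[OF a(2)] e30 a(1)])
        then have ?thesis by force }
      moreover
      { assume a: "E (vs!1) w" "E (vs!2) w"
        have "distinct [w, vs!1, vs!2]" using w1 w2 d by auto
        then have "is_cycle n E [w, vs!1, vs!2]" by (rule is_cycle3[OF _ w(1) l(2) l(3) sym[OF a(1)] e12 a(2)])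
        then have ?thesis by force }
      moreover
      { assume a: "E (vs!1) w" "E (vs!3) w"
        have "distinct [w, vs!1, vs!2, vs!3]" using w1 w2 w3 d by auto
        then have "is_cycle n E [w, vs!1, vs!2, vs!3]" by (rule is_cycle4[OF _ w(1) l(2) l(3) l(4) sym[OF a(1)] e12 e23 a(2)])
        then have ?thesis by force }
      ultimately show ?thesis using A B by blast
    qed
    then obtain ws where "is_cycle n E ws" "w \<in> set ws" by blast
    then show False using two_cycles[OF U cyc] w by blast
  next
    case 3
    have e01: "E (vs!0) (vs!1)" using ed'[of 0] 3 by (simp add: numeral_2_eq_2 numeral_3_eq_3)
    have e12: "E (vs!1) (vs!2)" using ed'[of 1] 3 by (simp add: numeral_2_eq_2 numeral_3_eq_3)
    have e23: "E (vs!2) (vs!3)" using ed'[of 2] 3 by (simp add: numeral_2_eq_2 numeral_3_eq_3)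
    have l: "vs!0 < n" "vs!1 < n" "vs!2 < n" "vs!3 < n" using lt 3 by auto
    have d: "vs!0 \<noteq> vs!1" "vs!1 \<noteq> vs!2" "vs!0 \<noteq> vs!2" "vs!0 \<noteq> vs!3" "vs!1 \<noteq> vs!3" "vs!2 \<noteq> vs!3"
      "vs!4 \<noteq> vs!0" "vs!4 \<noteq> vs!1" "vs!4 \<noteq> vs!2" "vs!4 \<noteq> vs!3"
      using ne 3 by auto
    have A: "E (vs!0) (vs!3) \<or> E (vs!1) (vs!3)" using D[of "vs!0" "vs!1" "vs!3"] e01 l d 3 by auto
    have i4: "vs!4 \<in> set vs" "vs!0 \<in> set vs" using inset 3 by auto
    show False
    proof (cases "E (vs!0) (vs!3)")
      case True
      have "distinct [vs!0, vs!1, vs!2, vs!3]" using d by auto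
      then have c: "is_cycle n E [vs!0, vs!1, vs!2, vs!3]" by (rule is_cycle4[OF _ l(1) l(2) l(3) l(4) e01 e12 e23 sym[OF True]])
      have "set vs \<noteq> set [vs!0, vs!1, vs!2, vs!3]" using i4 d by auto
      then show False using two_cycles[OF U cyc c] by blast
    next
      case False
      with A have a: "E (vs!1) (vs!3)" by simp
      have "distinct [vs!1, vs!2, vs!3]" using d by auto
      then have c: "is_cycle n E [vs!1, vs!2, vs!3]" by (rule is_cycle3[OF _ l(2) l(3) l(4) e12 e23 sym[OF a]])
      have "set vs \<noteq> set [vs!1, vs!2, vs!3]" using i4 d by auto
      then show False using two_cycles[OF U cyc c] by blast
    qed
  qed
qed



lemma NEG:
  fixes x :: "nat \<Rightarrow> real" and lam :: real
  assumes U: "unicyclic n E" and n: "n \<ge> 5"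
    and nz: "\<exists>i<n. x i \<noteq> 0" and lam: "lam < -1"
    and eq: "\<And>i. i < n \<Longrightarrow> (\<Sum>j<n. if compl_graph E i j then x j else 0) = lam * x i"
  shows "card {i. i < n \<and> x i < 0} \<ge> 2"
proof (rule ccontr)
  assume "\<not> ?thesis"
  then have c1: "card {i. i < n \<and> x i < 0} \<le> 1" by simp
  have sg: "simple_graph n E" using U unfolding unicyclic_def by simp
  then have sym: "\<And>u v. E u v \<Longrightarrow> E v u" and irr: "\<And>v. \<not> E v v"
    unfolding simple_graph_def by blast+
  have con: "connected_graph n E" using U unfolding unicyclic_def by simp
  define G where "G = compl_graph E"
  have G: "\<And>i j. G i j \<longleftrightarrow> i \<noteq> j \<and> \<not> E i j" unfolding G_def compl_graph_def by simp
  have Gs: "\<And>i j. G i j \<Longrightarrow> G j i" using G sym by blast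
  have eq': "\<And>i. i < n \<Longrightarrow> (\<Sum>j<n. if G i j then x j else 0) = lam * x i"
    using eq unfolding G_def .
  have fin: "finite {i. i < n \<and> x i < 0}" by simp
  consider "{i. i < n \<and> x i < 0} = {}" | v where "{i. i < n \<and> x i < 0} = {v}"
    using c1 fin by (metis card_0_eq card_1_singletonE le_Suc_eq One_nat_def le_zero_eq)
  then show False
  proof cases
    case 1
    then have nn: "\<And>i. i < n \<Longrightarrow> x i \<ge> 0" by fastforce
    obtain i where i: "i < n" "x i \<noteq> 0" using nz by blast
    with nn have xi: "x i > 0" by fastforce
    have "(\<Sum>j<n. if G i j then x j else 0) \<ge> 0" by (intro sum_nonneg) (auto simp: nn)
    moreover have "lam * x i < 0" using lam xi by (simp add: mult_neg_pos)
    ultimately show False using eq'[OF i(1)] by simp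
  next
    case 2
    have v: "v < n" "x v < 0" using 2 by auto
    have nn: "\<And>j. j < n \<Longrightarrow> j \<noteq> v \<Longrightarrow> x j \<ge> 0" using 2 by fastforce
    define c where "c = - x v"
    have c: "c > 0" using v unfolding c_def by simp
    define T where "T = {i. i < n \<and> x i > 0}"
    have vT: "v \<notin> T" using v unfolding T_def by simp
    have zero: "\<And>j. j < n \<Longrightarrow> j \<noteq> v \<Longrightarrow> j \<notin> T \<Longrightarrow> x j = 0"
      using nn unfolding T_def by fastforce
    have Tn: "\<And>w. w \<in> T \<Longrightarrow> w < n" and Tp: "\<And>w. w \<in> T \<Longrightarrow> x w > 0" unfolding T_def by auto
    have Gv: "\<And>w. w \<in> T \<Longrightarrow> G w v"
    proof (rule ccontr)
      fix w assume w: "w \<in> T" and ng: "\<not> G w v"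
      have "(\<Sum>j<n. if G w j then x j else 0) \<ge> 0"
        by (intro sum_nonneg) (use ng nn in auto)
      moreover have "lam * x w < 0" using lam Tp[OF w] by (simp add: mult_neg_pos)
      ultimately show False using eq'[OF Tn[OF w]] by simp
    qed
    define \<sigma> where "\<sigma> = (\<Sum>j<n. if j \<in> T then x j else 0)"
    have sigma: "\<sigma> = - lam * c"
    proof -
      have "(\<Sum>j<n. if G v j then x j else 0) = \<sigma>"
        unfolding \<sigma>_def
      proof (intro sum.cong refl)
        fix j assume "j \<in> {..<n}"
        then have j: "j < n" by simp
        show "(if G v j then x j else 0) = (if j \<in> T then x j else 0)"
        proof (cases "j \<in> T")
          case True then show ?thesis using Gs[OF Gv[OF True]] by simp
        next
          case False
          then show ?thesis using zero[OF j _ False] G by (cases "j = v") auto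
        qed
      qed
      then show ?thesis using eq'[OF v(1)] unfolding c_def by simp
    qed
    obtain z where z: "z < n" "E v z" using has_nbr[OF con v(1)] n by auto
    have zv: "z \<noteq> v" using z irr by auto
    have zT: "z \<notin> T" using Gv z(2) sym G by blast
    have xz: "x z = 0" using zero[OF z(1) zv zT] .
    have Ez: "\<And>w. w \<in> T \<Longrightarrow> E z w"
    proof -
      fix w assume w: "w \<in> T"
      have ngzv: "\<not> G z v" using G sym z(2) by blast
      have terms: "\<And>j. j \<in> {..<n} \<Longrightarrow> (if G z j then x j else 0) \<ge> 0"
        using ngzv nn by auto
      have "(\<Sum>j<n. if G z j then x j else 0) = 0" using eq'[OF z(1)] xz by simp
      then have "\<forall>j\<in>{..<n}. (if G z j then x j else 0) = 0"
        using sum_nonneg_eq_0_iff[of "{..<n}" "\<lambda>j. if G z j then x j else 0"] terms by simp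
      then have "(if G z w then x w else 0) = 0" using Tn[OF w] by simp
      then have "\<not> G z w" using Tp[OF w] by (auto split: if_splits)
      moreover have "z \<noteq> w" using zT w by auto
      ultimately show "E z w" using G by blast
    qed
    have Dpos: "\<And>w. w \<in> T \<Longrightarrow> \<exists>j. j \<in> T \<and> E w j"
    proof -
      fix w assume w: "w \<in> T"
      define D where "D = (\<Sum>j<n. if j \<in> T \<and> E w j then x j else 0)"
      have "(\<Sum>j<n. if G w j then x j else 0) =
            (\<Sum>j<n. (if j = v then x j else 0) + (if j \<in> T then x j else 0)
                    - (if j = w then x j else 0) - (if j \<in> T \<and> E w j then x j else 0))"
      proof (intro sum.cong refl)
        fix j assume "j \<in> {..<n}"
        then have j: "j < n" by simp
        have wv: "w \<noteq> v" using w vT by auto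
        show "(if G w j then x j else 0) = (if j = v then x j else 0) + (if j \<in> T then x j else 0)
                    - (if j = w then x j else 0) - (if j \<in> T \<and> E w j then x j else 0)"
        proof (cases "j = v")
          case True then show ?thesis using Gv[OF w] vT wv by simp
        next
          case False
          show ?thesis
          proof (cases "j \<in> T")
            case True
            then show ?thesis using False G irr by (cases "j = w") auto
          next
            case jT: False
            then show ?thesis using zero[OF j False jT] w by auto
          qed
        qed
      qed
      also have "\<dots> = x v + \<sigma> - x w - D"
        unfolding \<sigma>_def D_def using v(1) Tn[OF w]
        by (simp add: sum.distrib sum_subtractf)
      finally have "lam * x w = x v + \<sigma> - x w - D" using eq'[OF Tn[OF w]] by simp
      then have "D = (- 1 - lam) * (c + x w)" using sigma unfolding c_def
        by (simp add: algebra_simps)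
      moreover have "(- 1 - lam) * (c + x w) > 0" using lam c Tp[OF w] by (intro mult_pos_pos) auto
      ultimately have "D > 0" by simp
      show "\<exists>j. j \<in> T \<and> E w j"
      proof (rule ccontr)
        assume "\<not> ?thesis"
        then have "D = 0" unfolding D_def by (intro sum.neutral) auto
        with \<open>D > 0\<close> show False by simp
      qed
    qed
    have "T \<noteq> {}"
    proof
      assume "T = {}"
      then have "\<sigma> = 0" unfolding \<sigma>_def by simp
      moreover have "- lam * c > 0" using lam c by (simp add: mult_neg_pos)
      ultimately show False using sigma by linarith
    qed
    then obtain a where a: "a \<in> T" by blast
    obtain b where b: "b \<in> T" "E a b" using Dpos[OF a] by blast
    have ab: "a \<noteq> b" using b irr by auto
    have za: "z \<noteq> a" "z \<noteq> b" using zT a b by auto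
    have an: "a < n" "b < n" using Tn a b by auto
    have cyc0: "is_cycle n E [z, a, b]"
      by (rule is_cycle3) (use za ab z(1) an Ez[OF a] b(2) sym[OF Ez[OF b(1)]] in auto)
    have Tab: "T = {a, b}"
    proof
      show "T \<subseteq> {a, b}"
      proof
        fix w assume w: "w \<in> T"
        show "w \<in> {a, b}"
        proof (rule ccontr)
          assume wab: "w \<notin> {a, b}"
          obtain w' where w': "w' \<in> T" "E w w'" using Dpos[OF w] by blast
          have "is_cycle n E [z, w, w']"
            by (rule is_cycle3) (use zT z(1) w w' irr Tn Ez[OF w] sym[OF Ez[OF w'(1)]] in auto)
          moreover have "set [z, w, w'] \<noteq> set [z, a, b]" using wab za zT w by auto
          ultimately show False using two_cycles[OF U cyc0] by blast
        qed
      qed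
      show "{a, b} \<subseteq> T" using a b by auto
    qed
    have supp: "\<And>j. j < n \<Longrightarrow> j \<notin> {a, b, v} \<Longrightarrow> x j = 0" using zero Tab by auto
    have av: "a \<noteq> v" "b \<noteq> v" using a b vT by auto
    have Sa: "lam * x a = - c"
    proof -
      have "(\<Sum>j<n. if G a j then x j else 0) = (\<Sum>j<n. if j = v then x j else 0)"
      proof (intro sum.cong refl)
        fix j assume "j \<in> {..<n}"
        then have j: "j < n" by simp
        show "(if G a j then x j else 0) = (if j = v then x j else 0)"
          using supp[OF j] Gv[OF a] G b(2) av by (cases "j = a"; cases "j = b"; cases "j = v") auto
      qed
      also have "\<dots> = x v" using v(1) by simp
      finally show ?thesis using eq'[OF an(1)] unfolding c_def by simp
    qed
    have Sb: "lam * x b = - c"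
    proof -
      have "(\<Sum>j<n. if G b j then x j else 0) = (\<Sum>j<n. if j = v then x j else 0)"
      proof (intro sum.cong refl)
        fix j assume "j \<in> {..<n}"
        then have j: "j < n" by simp
        show "(if G b j then x j else 0) = (if j = v then x j else 0)"
          using supp[OF j] Gv[OF b(1)] G sym[OF b(2)] av by (cases "j = a"; cases "j = b"; cases "j = v") auto
      qed
      also have "\<dots> = x v" using v(1) by simp
      finally show ?thesis using eq'[OF an(2)] unfolding c_def by simp
    qed
    have sab: "x a + x b = - lam * c"
    proof -
      have "\<sigma> = (\<Sum>j<n. (if j = a then x j else 0) + (if j = b then x j else 0))"
        unfolding \<sigma>_def Tab by (intro sum.cong refl) (use ab in auto)
      also have "\<dots> = x a + x b" using an by (simp add: sum.distrib)
      finally show ?thesis using sigma by simp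
    qed
    have xab: "x a = x b"
    proof -
      have "lam \<noteq> 0" using lam by simp
      moreover have "lam * x a = lam * x b" using Sa Sb by simp
      ultimately show ?thesis by simp
    qed
    define t where "t = x a"
    have t: "t > 0" unfolding t_def using Tp a by simp
    have c4: "card {v, z, a, b} \<le> 4" using card_length[of "[v, z, a, b]"] by simp
    have cn: "card {v, z, a, b} < n" using c4 n by linarith
    have fin4: "finite {v, z, a, b}" by simp
    obtain y where y: "y < n" "y \<notin> {v, z, a, b}" by (rule exists_outside[OF fin4 cn])
    have Sy: "(if G y a then x a else 0) + (if G y b then x b else 0) + (if G y v then x v else 0) = 0"
    proof -
      have xy: "x y = 0" using zero[OF y(1)] y Tab by auto
      have "(\<Sum>j<n. if G y j then x j else 0) =
            (\<Sum>j<n. (if j = a then (if G y a then x a else 0) else 0)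
                  + (if j = b then (if G y b then x b else 0) else 0)
                  + (if j = v then (if G y v then x v else 0) else 0))"
      proof (intro sum.cong refl)
        fix j assume "j \<in> {..<n}"
        then have j: "j < n" by simp
        show "(if G y j then x j else 0) = (if j = a then (if G y a then x a else 0) else 0)
                  + (if j = b then (if G y b then x b else 0) else 0)
                  + (if j = v then (if G y v then x v else 0) else 0)"
          using supp[OF j] ab av by (cases "j = a"; cases "j = b"; cases "j = v") auto
      qed
      also have "\<dots> = (if G y a then x a else 0) + (if G y b then x b else 0) + (if G y v then x v else 0)"
        using an v(1) by (simp add: sum.distrib)
      finally show ?thesis using eq'[OF y(1)] xy by simp
    qed
    show False
    proof (cases "E y a \<and> E y b")
      case True
      have "is_cycle n E [y, a, b]"
        by (rule is_cycle3) (use y ab an True b(2) sym[OF conjunct2[OF True]] in auto)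
      moreover have "set [y, a, b] \<noteq> set [z, a, b]" using y za by auto
      ultimately show False using two_cycles[OF U cyc0] by blast
    next
      case False
      have ya: "y \<noteq> a" "y \<noteq> b" "y \<noteq> v" using y by auto
      have Gya: "G y a \<or> G y b" using False G ya by blast
      have lc: "lam * t = - c" using Sa unfolding t_def .
      have s2: "2 * t = - lam * c" using sab xab unfolding t_def by simp
      have "lam \<noteq> -1" using lam by simp
      show False
      proof (cases "G y a \<and> G y b")
        case True
        then have "2 * t + (if G y v then - c else 0) = 0" using Sy xab unfolding t_def c_def by auto
        then show False
        proof (cases "G y v")
          case True
          with \<open>2 * t + (if G y v then - c else 0) = 0\<close> have "2 * t = c" by simp
          with s2 have "(lam + 1) * c = 0" by (simp add: algebra_simps)
          with c \<open>lam \<noteq> -1\<close> show False by simp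
        qed (use t in simp)
      next
        case False
        with Gya have "t + (if G y v then - c else 0) = 0" using Sy xab unfolding t_def c_def by auto
        then show False
        proof (cases "G y v")
          case True
          with \<open>t + (if G y v then - c else 0) = 0\<close> have "t = c" by simp
          with lc have "(lam + 1) * c = 0" by (simp add: algebra_simps)
          with c \<open>lam \<noteq> -1\<close> show False by simp
        qed (use t in simp)
      qed
    qed
  qed
qed



lemma sum3:
  fixes g :: "nat \<Rightarrow> real"
  assumes "p < n" "q < n" "b < n" "p \<noteq> q" "p \<noteq> b" "q \<noteq> b"
  shows "(\<Sum>i<n. (if i = p then 1 else if i = q then 1 else if i = b then -1 else 0) * g i) = g p + g q - g b"
proof -
  have "(\<Sum>i<n. (if i = p then 1 else if i = q then 1 else if i = b then -1 else 0) * g i)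
      = (\<Sum>i<n. (if i = p then g i else 0) + (if i = q then g i else 0) - (if i = b then g i else 0))"
    by (intro sum.cong refl) (use assms in auto)
  also have "\<dots> = g p + g q - g b" using assms by (simp add: sum.distrib sum_subtractf)
  finally show ?thesis .
qed

theorem lemma3p3:
  fixes n :: nat and E :: "nat \<Rightarrow> nat \<Rightarrow> bool" and X :: "real vec"
  assumes "unicyclic n E" and "n \<ge> 5"
    and "eigenvector (adj_mat n (compl_graph E)) X (lambda_min (adj_mat n (compl_graph E)))"
  shows "card {i. i < n \<and> X $ i > 0} \<ge> 2 \<and> card {i. i < n \<and> X $ i < 0} \<ge> 2"
proof -
  note U = assms(1) and n = assms(2)
  define G where "G = compl_graph E"
  define A where "A = adj_mat n G"
  define lam where "lam = lambda_min A"
  have sg: "simple_graph n E" using U unfolding unicyclic_def by simp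
  then have sym: "\<And>u v. E u v \<Longrightarrow> E v u" and irr: "\<And>v. \<not> E v v"
    unfolding simple_graph_def by blast+
  have Gd: "\<And>i j. G i j \<longleftrightarrow> i \<noteq> j \<and> \<not> E i j" unfolding G_def compl_graph_def by simp
  have A: "A \<in> carrier_mat n n" unfolding A_def adj_mat_def by simp
  have Aij: "\<And>i j. i < n \<Longrightarrow> j < n \<Longrightarrow> A $$ (i,j) = (if G i j then 1 else 0)"
    unfolding A_def adj_mat_def by simp
  have Asym: "\<And>i j. i < n \<Longrightarrow> j < n \<Longrightarrow> A $$ (i,j) = A $$ (j,i)"
    using Aij Gd sym by auto
  have ev: "eigenvector A X lam" using assms(3) unfolding A_def lam_def G_def .
  then have Xc: "X \<in> carrier_vec n" and X0: "X \<noteq> 0\<^sub>v n" and AX: "A *\<^sub>v X = lam \<cdot>\<^sub>v X"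
    unfolding eigenvector_def using A by auto
  define x where "x = (\<lambda>i. X $ i)"
  have eq: "\<And>i. i < n \<Longrightarrow> (\<Sum>j<n. if compl_graph E i j then x j else 0) = lam * x i"
  proof -
    fix i assume i: "i < n"
    have "(A *\<^sub>v X) $ i = (\<Sum>j<n. A $$ (i,j) * X $ j)" by (rule mult_mat_vec_idx[OF A Xc i])
    also have "\<dots> = (\<Sum>j<n. if compl_graph E i j then x j else 0)"
      by (intro sum.cong refl) (simp add: Aij i x_def G_def)
    finally show "(\<Sum>j<n. if compl_graph E i j then x j else 0) = lam * x i"
      using AX Xc i unfolding x_def by simp
  qed
  have nz: "\<exists>i<n. x i \<noteq> 0"
  proof (rule ccontr)
    assume "\<not> ?thesis"
    then have "X = 0\<^sub>v n" using Xc unfolding x_def by (intro eq_vecI) auto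
    with X0 show False by simp
  qed
  obtain p q b where pqb: "p < n" "q < n" "b < n" "p \<noteq> b" "q \<noteq> b" "E p q" "\<not> E p b" "\<not> E q b"
    using P3[OF U n] by blast
  have pq: "p \<noteq> q" using pqb(6) irr by auto
  define y :: "nat \<Rightarrow> real" where "y = (\<lambda>i. if i = p then 1 else if i = q then 1 else if i = b then -1 else 0)"
  define a where "a = (\<lambda>i j. A $$ (i,j))"
  have s3: "\<And>g. (\<Sum>i<n. y i * g i) = g p + g q - g b"
    unfolding y_def using sum3[OF pqb(1-3) pq pqb(4-5)] by simp
  have mvy: "\<And>i. mv n a y i = a i p + a i q - a i b"
  proof -
    fix i
    have "mv n a y i = (\<Sum>j<n. y j * a i j)" unfolding mv_def by (simp add: mult.commute)
    also have "\<dots> = a i p + a i q - a i b" by (rule s3)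
    finally show "mv n a y i = a i p + a i q - a i b" .
  qed
  have entries: "a p p = 0" "a p q = 0" "a p b = 1" "a q p = 0" "a q q = 0" "a q b = 1"
    "a b p = 1" "a b q = 1" "a b b = 0"
    unfolding a_def using pqb pq by (auto simp: Aij Gd dest: sym)
  have bly: "bl n a y y = -4" unfolding bl_def s3 mvy entries by simp
  have nqy: "nq n y = 3"
  proof -
    have "nq n y = (\<Sum>i<n. y i * y i)" unfolding nq_def by (simp add: power2_eq_square)
    also have "\<dots> = 3" unfolding s3 by (simp add: y_def pq pqb(4-5) pq[symmetric] pqb(4-5)[symmetric])
    finally show ?thesis .
  qed
  have "bl n (\<lambda>i j. A $$ (i,j)) y y < (-1) * nq n y" using bly nqy unfolding a_def by simp
  then obtain e where e: "eigenvalue A e" "e < -1"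
    using exists_eigenvalue_below[OF A Asym] by blast
  have "lam \<le> e" unfolding lam_def lambda_min_def
    by (rule Min_le) (use finite_eigenvalues[OF A] e in auto)
  with e have lam1: "lam < -1" by simp
  have neg: "card {i. i < n \<and> x i < 0} \<ge> 2" by (rule NEG[OF U n nz lam1 eq])
  have eq2: "\<And>i. i < n \<Longrightarrow> (\<Sum>j<n. if compl_graph E i j then - x j else 0) = lam * (- x i)"
  proof -
    fix i assume i: "i < n"
    have "(\<Sum>j<n. if compl_graph E i j then - x j else 0) = - (\<Sum>j<n. if compl_graph E i j then x j else 0)"
    proof -
      have "(\<Sum>j<n. if compl_graph E i j then - x j else 0) = (\<Sum>j<n. - (if compl_graph E i j then x j else 0))"
        by (intro sum.cong) auto
      then show ?thesis by (simp add: sum_negf)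
    qed
    also have "\<dots> = lam * (- x i)" using eq[OF i] by simp
    finally show "(\<Sum>j<n. if compl_graph E i j then - x j else 0) = lam * (- x i)" .
  qed
  have nz2: "\<exists>i<n. - x i \<noteq> 0" using nz by simp
  have pos: "card {i. i < n \<and> - x i < 0} \<ge> 2" by (rule NEG[OF U n nz2 lam1 eq2])
  show ?thesis using neg pos unfolding x_def by simp
qed


end
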